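(* Let $H$ be a monoid and $X,Y\in\mathcal{P}_{\mathrm{fin},1}(H)$. Then: (i) if $X$ divides $Y$ in $\mathcal{P}_{\mathrm{fin},1}(H)$, then $X\subseteq Y$; (ii) $\mathcal{P}_{\mathrm{fin},1}(H)$ is reduced and Dedekind-finite; (iii) $X$ and $Y$ are associated in $\mathcal{P}_{\mathrm{fin},1}(H)$ if and only if $X=Y$; (iv) $X$ is irreducible in $\mathcal{P}_{\mathrm{fin},1}(H)$ if and only if $X\neq\{1_H\}$ and $X\neq YZ$ for all $Y,Z\in\mathcal{P}_{\mathrm{fin},1}(H)$ with $Y\subsetneq X$ and $Z\subsetneq X$; (v) $X$ is irreducible in $\mathcal{P}_{\mathrm{fin},1}(H)$ if and only if it is a quark; (vi) if $X$ is irreducible in $\mathcal{P}_{\mathrm{fin},1}(H)$ but not an atom, then $X^2=X$.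
   Context: For a monoid $H$, $\mathcal{P}_{\mathrm{fin},1}(H)$ denotes the set of all non-empty finite subsets of $H$ containing $1_H$, a monoid under $XY=\{xy:x\in X,y\in Y\}$ with identity $\{1_H\}$. In a monoid $M$: $x\mid_M y$ iff $y\in MxM=\{uxv:u,v\in M\}$; $x,y$ are associated if each divides the other; $x$ properly divides $y$ if $x\mid_M y$ and $y\nmid_M x$. A unit-divisor is an element dividing $1_M$; other elements are non-unit-divisors. An irreducible is a non-unit-divisor $a$ such that $a\neq xy$ for all non-unit-divisors $x,y$ properly dividing $a$. An atom is a non-unit-divisor that is not a product of two non-unit-divisors. A quark is a non-unit-divisor that is not properly divided by any non-unit-divisor. $M$ is reduced if its only unit is $1_M$, and Dedekind-finite if $xy=1_M$ implies $yx=1_M$. *)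

theory Defs
  imports Main
begin

definition Pf1 :: "'a::monoid_mult set set" where
  "Pf1 = {X. finite X \<and> X \<noteq> {} \<and> 1 \<in> X}"

definition smul :: "'a::times set \<Rightarrow> 'a set \<Rightarrow> 'a set" where
  "smul X Y = {x * y | x y. x \<in> X \<and> y \<in> Y}"

text \<open>Generic notions for a monoid given by carrier M, operation f and identity e.\<close>

definition mdvd :: "'m set \<Rightarrow> ('m \<Rightarrow> 'm \<Rightarrow> 'm) \<Rightarrow> 'm \<Rightarrow> 'm \<Rightarrow> bool" where
  "mdvd M f x y \<longleftrightarrow> (\<exists>u\<in>M. \<exists>v\<in>M. y = f (f u x) v)"

definition massoc :: "'m set \<Rightarrow> ('m \<Rightarrow> 'm \<Rightarrow> 'm) \<Rightarrow> 'm \<Rightarrow> 'm \<Rightarrow> bool" where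
  "massoc M f x y \<longleftrightarrow> mdvd M f x y \<and> mdvd M f y x"

definition mpdvd :: "'m set \<Rightarrow> ('m \<Rightarrow> 'm \<Rightarrow> 'm) \<Rightarrow> 'm \<Rightarrow> 'm \<Rightarrow> bool" where
  "mpdvd M f x y \<longleftrightarrow> mdvd M f x y \<and> \<not> mdvd M f y x"

definition munit_divisor :: "'m set \<Rightarrow> ('m \<Rightarrow> 'm \<Rightarrow> 'm) \<Rightarrow> 'm \<Rightarrow> 'm \<Rightarrow> bool" where
  "munit_divisor M f e x \<longleftrightarrow> mdvd M f x e"

definition mirreducible :: "'m set \<Rightarrow> ('m \<Rightarrow> 'm \<Rightarrow> 'm) \<Rightarrow> 'm \<Rightarrow> 'm \<Rightarrow> bool" where
  "mirreducible M f e a \<longleftrightarrow> a \<in> M \<and> \<not> munit_divisor M f e a \<and>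
     (\<forall>x\<in>M. \<forall>y\<in>M. \<not> munit_divisor M f e x \<and> \<not> munit_divisor M f e y \<and>
        mpdvd M f x a \<and> mpdvd M f y a \<longrightarrow> a \<noteq> f x y)"

definition matom :: "'m set \<Rightarrow> ('m \<Rightarrow> 'm \<Rightarrow> 'm) \<Rightarrow> 'm \<Rightarrow> 'm \<Rightarrow> bool" where
  "matom M f e a \<longleftrightarrow> a \<in> M \<and> \<not> munit_divisor M f e a \<and>
     (\<forall>x\<in>M. \<forall>y\<in>M. \<not> munit_divisor M f e x \<and> \<not> munit_divisor M f e y \<longrightarrow> a \<noteq> f x y)"

definition mquark :: "'m set \<Rightarrow> ('m \<Rightarrow> 'm \<Rightarrow> 'm) \<Rightarrow> 'm \<Rightarrow> 'm \<Rightarrow> bool" where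
  "mquark M f e a \<longleftrightarrow> a \<in> M \<and> \<not> munit_divisor M f e a \<and>
     (\<forall>x\<in>M. \<not> munit_divisor M f e x \<longrightarrow> \<not> mpdvd M f x a)"

definition munit :: "'m set \<Rightarrow> ('m \<Rightarrow> 'm \<Rightarrow> 'm) \<Rightarrow> 'm \<Rightarrow> 'm \<Rightarrow> bool" where
  "munit M f e u \<longleftrightarrow> u \<in> M \<and> (\<exists>v\<in>M. f u v = e \<and> f v u = e)"

definition mreduced :: "'m set \<Rightarrow> ('m \<Rightarrow> 'm \<Rightarrow> 'm) \<Rightarrow> 'm \<Rightarrow> bool" where
  "mreduced M f e \<longleftrightarrow> (\<forall>u. munit M f e u \<longrightarrow> u = e)"

definition mdedekind_finite :: "'m set \<Rightarrow> ('m \<Rightarrow> 'm \<Rightarrow> 'm) \<Rightarrow> 'm \<Rightarrow> bool" where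
  "mdedekind_finite M f e \<longleftrightarrow> (\<forall>x\<in>M. \<forall>y\<in>M. f x y = e \<longrightarrow> f y x = e)"

end

theory Submission
  imports Defs
begin

lemma Pf1_iff: "X \<in> Pf1 \<longleftrightarrow> finite X \<and> 1 \<in> X"
  unfolding Pf1_def by auto

lemma Pf1_one: "X \<in> Pf1 \<Longrightarrow> (1::'a::monoid_mult) \<in> X"
  unfolding Pf1_def by simp

lemma smul_eq: "smul X Y = (\<lambda>(x,y). x * y) ` (X \<times> Y)"
  unfolding smul_def by auto

lemma smul_Pf1: "X \<in> Pf1 \<Longrightarrow> Y \<in> Pf1 \<Longrightarrow> smul X Y \<in> Pf1"
  unfolding Pf1_iff smul_eq by (auto intro!: image_eqI[where x="(1,1)"])

lemma smul_sup1: "1 \<in> (Y::'a::monoid_mult set) \<Longrightarrow> X \<subseteq> smul X Y"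
  unfolding smul_def by force

lemma smul_sup2: "1 \<in> (X::'a::monoid_mult set) \<Longrightarrow> Y \<subseteq> smul X Y"
  unfolding smul_def by force


lemma smul_1l: "smul {1} X = (X::'a::monoid_mult set)"
  unfolding smul_def by auto

lemma smul_1r: "smul X {1} = (X::'a::monoid_mult set)"
  unfolding smul_def by auto

lemma one_Pf1: "{1} \<in> Pf1"
  unfolding Pf1_def by simp

lemma mdvd_sub: "mdvd Pf1 smul X Y \<Longrightarrow> X \<subseteq> (Y::'a::monoid_mult set)"
proof -
  assume "mdvd Pf1 smul X Y"
  then obtain u v where uv: "u \<in> Pf1" "v \<in> Pf1" "Y = smul (smul u X) v"
    unfolding mdvd_def by blast
  have "X \<subseteq> smul u X" using uv(1) smul_sup2 Pf1_one by blast
  also have "\<dots> \<subseteq> Y" using uv smul_sup1 Pf1_one by blast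
  finally show ?thesis .
qed

lemma mdvd_left: "Y \<in> Pf1 \<Longrightarrow> Z \<in> Pf1 \<Longrightarrow> mdvd Pf1 smul Y (smul Y (Z::'a::monoid_mult set))"
  unfolding mdvd_def by (metis one_Pf1 smul_1l)

lemma mdvd_right: "Y \<in> Pf1 \<Longrightarrow> Z \<in> Pf1 \<Longrightarrow> mdvd Pf1 smul Z (smul Y (Z::'a::monoid_mult set))"
  unfolding mdvd_def by (metis one_Pf1 smul_1r)

lemma ud_iff: "X \<in> Pf1 \<Longrightarrow> munit_divisor Pf1 smul {1} X \<longleftrightarrow> X = {(1::'a::monoid_mult)}"
proof
  assume X: "X \<in> Pf1" and "munit_divisor Pf1 smul {1} X"
  then have "X \<subseteq> {1}" using mdvd_sub unfolding munit_divisor_def by blast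
  then show "X = {1}" using X Pf1_one by blast
next
  assume "X = {1}"
  then show "munit_divisor Pf1 smul {1} X" unfolding munit_divisor_def
    using mdvd_left[OF one_Pf1 one_Pf1] smul_1r by metis
qed

lemma mpdvd_sub: "mpdvd Pf1 smul Y X \<Longrightarrow> Y \<subset> (X::'a::monoid_mult set)"
  unfolding mpdvd_def using mdvd_sub by blast

lemma key_r:
  assumes X: "X \<in> Pf1" and y: "y \<in> X" "y \<noteq> 1" and cl: "\<forall>x\<in>X. x * y \<in> X"
  shows "X = smul (X - {y}) {1, (y::'a::monoid_mult)}"
proof
  show "smul (X - {y}) {1, y} \<subseteq> X"
  proof
    fix w assume "w \<in> smul (X - {y}) {1, y}"
    then obtain a b where ab: "w = a * b" "a \<in> X" "b = 1 \<or> b = y" unfolding smul_def by blast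
    then show "w \<in> X" using cl by auto
  qed
  have "1 \<in> X - {y}" using X y Pf1_one by auto
  show "X \<subseteq> smul (X - {y}) {1, y}"
  proof
    fix x assume x: "x \<in> X"
    show "x \<in> smul (X - {y}) {1, y}"
    proof (cases "x = y")
      case True
      then have "x = 1 * y" by simp
      then show ?thesis using \<open>1 \<in> X - {y}\<close> unfolding smul_def by (intro CollectI exI[of _ "1"] exI[of _ y]; simp)
    next
      case False
      then have "x = x * 1" by simp
      then show ?thesis using x False unfolding smul_def by blast
    qed
  qed
qed

lemma key_l:
  assumes X: "X \<in> Pf1" and y: "y \<in> X" "y \<noteq> 1" and cl: "\<forall>x\<in>X. y * x \<in> X"
  shows "X = smul {1, (y::'a::monoid_mult)} (X - {y})"
proof
  show "smul {1, y} (X - {y}) \<subseteq> X"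
  proof
    fix w assume "w \<in> smul {1, y} (X - {y})"
    then obtain a b where ab: "w = a * b" "b \<in> X" "a = 1 \<or> a = y" unfolding smul_def by blast
    then show "w \<in> X" using cl by auto
  qed
  have "1 \<in> X - {y}" using X y Pf1_one by auto
  show "X \<subseteq> smul {1, y} (X - {y})"
  proof
    fix x assume x: "x \<in> X"
    show "x \<in> smul {1, y} (X - {y})"
    proof (cases "x = y")
      case True
      then have "x = y * 1" by simp
      then show ?thesis using \<open>1 \<in> X - {y}\<close> unfolding smul_def by (intro CollectI exI[of _ "1"] exI[of _ y]; simp)
    next
      case False
      then have "x = 1 * x" by simp
      then show ?thesis using x False unfolding smul_def by blast
    qed
  qed
qed

definition RHS :: "'a::monoid_mult set \<Rightarrow> bool" where
  "RHS X \<longleftrightarrow> X \<noteq> {1} \<and> (\<forall>Y'\<in>Pf1. \<forall>Z\<in>Pf1. Y' \<subset> X \<and> Z \<subset> X \<longrightarrow> X \<noteq> smul Y' Z)"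

lemma irr_iff:
  assumes X: "X \<in> Pf1"
  shows "mirreducible Pf1 smul {1} X \<longleftrightarrow> RHS (X::'a::monoid_mult set)"
proof
  assume irr: "mirreducible Pf1 smul {1} X"
  have ne: "X \<noteq> {1}" using irr X ud_iff unfolding mirreducible_def by blast
  show "RHS X" unfolding RHS_def
  proof (intro conjI ne ballI impI)
    fix Y' Z assume YZ: "Y' \<in> Pf1" "Z \<in> Pf1" "Y' \<subset> X \<and> Z \<subset> X"
    show "X \<noteq> smul Y' Z"
    proof
      assume eq: "X = smul Y' Z"
      have "Y' \<noteq> {1}" using eq YZ smul_1l by blast
      moreover have "Z \<noteq> {1}" using eq YZ smul_1r by blast
      moreover have "mpdvd Pf1 smul Y' X" using YZ eq mdvd_left mdvd_sub
        unfolding mpdvd_def by blast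
      moreover have "mpdvd Pf1 smul Z X" using YZ eq mdvd_right mdvd_sub
        unfolding mpdvd_def by blast
      ultimately show False using irr YZ eq ud_iff unfolding mirreducible_def by blast
    qed
  qed
next
  assume R: "RHS X"
  show "mirreducible Pf1 smul {1} X" unfolding mirreducible_def
    using R X ud_iff mpdvd_sub unfolding RHS_def by metis
qed

lemma closed_contra_r:
  assumes X: "X \<in> Pf1" and R: "RHS X" and y: "y \<in> X" "y \<noteq> 1"
    and sub: "{1, y} \<subset> X" and cl: "\<forall>x\<in>X. x * y \<in> X"
  shows False
proof -
  have e: "X = smul (X - {y}) {1, (y::'a::monoid_mult)}" using key_r X y cl by blast
  have "X - {y} \<in> Pf1" "{1,y} \<in> Pf1" using X y unfolding Pf1_def by auto
  moreover have "X - {y} \<subset> X" using y by auto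
  ultimately show False using R sub e unfolding RHS_def by blast
qed

lemma closed_contra_l:
  assumes X: "X \<in> Pf1" and R: "RHS X" and y: "y \<in> X" "y \<noteq> 1"
    and sub: "{1, y} \<subset> X" and cl: "\<forall>x\<in>X. y * x \<in> X"
  shows False
proof -
  have e: "X = smul {1, (y::'a::monoid_mult)} (X - {y})" using key_l X y cl by blast
  have "X - {y} \<in> Pf1" "{1,y} \<in> Pf1" using X y unfolding Pf1_def by auto
  moreover have "X - {y} \<subset> X" using y by auto
  ultimately show False using R sub e unfolding RHS_def by blast
qed

lemma pick:
  assumes "Y \<in> Pf1" "Y \<noteq> {1}" "Y \<subset> X"
  obtains y where "y \<in> Y" "y \<noteq> (1::'a::monoid_mult)" "{1, y} \<subset> X"
proof -
  obtain y where "y \<in> Y" "y \<noteq> 1" using assms Pf1_one by blast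
  moreover have "{1,y} \<subseteq> Y" using assms calculation Pf1_one by auto
  ultimately show ?thesis using that assms by blast
qed

lemma irr_quark:
  assumes X: "X \<in> Pf1" and R: "RHS (X::'a::monoid_mult set)"
  shows "mquark Pf1 smul {1} X"
  unfolding mquark_def
proof (intro conjI ballI impI)
  show "X \<in> Pf1" by fact
  show "\<not> munit_divisor Pf1 smul {1} X" using R X ud_iff RHS_def by blast
  fix Y :: "'a set" assume Y: "Y \<in> Pf1" "\<not> munit_divisor Pf1 smul {1} Y"
  have Y1: "Y \<noteq> {1}" using Y ud_iff by blast
  show "\<not> mpdvd Pf1 smul Y X"
  proof
    assume p: "mpdvd Pf1 smul Y X"
    have YX: "Y \<subset> X" using mpdvd_sub p by blast
    obtain U V where UV: "U \<in> Pf1" "V \<in> Pf1" "X = smul (smul U Y) V"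
      using p unfolding mpdvd_def mdvd_def by blast
    obtain y where y: "y \<in> Y" "y \<noteq> 1" "{1, y} \<subset> X" using pick Y Y1 YX by blast
    have yX: "y \<in> X" using y by blast
    have UYX: "smul U Y \<subseteq> X" using UV(2,3) smul_sup1[OF Pf1_one] by metis
    have VX: "V \<subseteq> X" using UV(1,3) Y(1) smul_sup2[OF Pf1_one] smul_Pf1 by metis
    have "U \<subseteq> smul U Y" using smul_sup1[OF Pf1_one[OF Y(1)]] .
    then have UX: "U \<subseteq> X" using UYX by blast
    have UYP: "smul U Y \<in> Pf1" using UV Y smul_Pf1 by blast
    show False
    proof (cases "V = X")
      case True
      have "\<forall>x\<in>X. y * x \<in> X"
      proof
        fix x assume "x \<in> X"
        have "1 \<in> U" using UV Pf1_one by blast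
        then have "1 * y \<in> smul U Y" using y unfolding smul_def by blast
        moreover have "x \<in> V" using True \<open>x \<in> X\<close> by simp
        ultimately have "(1 * y) * x \<in> smul (smul U Y) V" unfolding smul_def by blast
        then show "y * x \<in> X" using UV(3) by simp
      qed
      then show False using closed_contra_l X R yX y by blast
    next
      case Vne: False
      show False
      proof (cases "U = X")
        case True
        have "\<forall>x\<in>X. x * y \<in> X"
        proof
          fix x assume "x \<in> X"
          have "1 \<in> V" using UV Pf1_one by blast
          have "x * y \<in> smul U Y" using y True \<open>x \<in> X\<close> unfolding smul_def by blast
          then have "(x * y) * 1 \<in> smul (smul U Y) V" using \<open>1 \<in> V\<close> unfolding smul_def by blast
          then show "x * y \<in> X" using UV(3) by simp
        qed
        then show False using closed_contra_r X R yX y by blast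
      next
        case Une: False
        show False
        proof (cases "smul U Y = X")
          case True
          have "U \<noteq> {1}" using True smul_1l YX by blast
          then show False using R UV Y True UX Une YX unfolding RHS_def by blast
        next
          case False
          have "V \<noteq> {1}" using False UV smul_1r by metis
          then show False using R UV UYP False UYX VX Vne unfolding RHS_def by blast
        qed
      qed
    qed
  qed
qed

lemma quark_irr:
  assumes X: "X \<in> Pf1" and q: "mquark Pf1 smul {1} (X::'a::monoid_mult set)"
  shows "mirreducible Pf1 smul {1} X"
  using q unfolding mquark_def mirreducible_def by blast

lemma not_atom_idem:
  assumes X: "X \<in> Pf1" and R: "RHS (X::'a::monoid_mult set)"
    and na: "\<not> matom Pf1 smul {1} X"
  shows "smul X X = X"
proof -
  have X1: "X \<noteq> {1}" using R unfolding RHS_def by blast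
  have "\<not> munit_divisor Pf1 smul {1} X" using ud_iff[OF X] X1 by blast
  then obtain Y Z where YZ0: "Y \<in> Pf1" "Z \<in> Pf1" "\<not> munit_divisor Pf1 smul {1} Y"
      "\<not> munit_divisor Pf1 smul {1} Z" "X = smul Y Z"
    using na X unfolding matom_def by blast
  have YZ: "Y \<in> Pf1" "Z \<in> Pf1" "Y \<noteq> {1}" "Z \<noteq> {1}" "X = smul Y Z"
    using YZ0 ud_iff[OF YZ0(1)] ud_iff[OF YZ0(2)] by auto
  have YX: "Y \<subseteq> X" using smul_sup1[OF Pf1_one[OF YZ(2)], of Y] YZ(5) by simp
  have ZX: "Z \<subseteq> X" using smul_sup2[OF Pf1_one[OF YZ(1)], of Z] YZ(5) by simp
  have "\<not> (Y \<subset> X \<and> Z \<subset> X)" using R YZ(1,2,5) unfolding RHS_def by blast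
  then have "Y = X \<or> Z = X" using YX ZX by blast
  then show ?thesis
  proof
    assume YXe: "Y = X"
    show ?thesis
    proof (rule ccontr)
      assume "smul X X \<noteq> X"
      have "Z \<noteq> X"
      proof
        assume h: "Z = X"
        have "smul Y Z = smul X X" by (simp only: h YXe)
        then show False using YZ(5) \<open>smul X X \<noteq> X\<close> by simp
      qed
      then have "Z \<subset> X" using ZX by blast
      then obtain z where z: "z \<in> Z" "z \<noteq> 1" "{1, z} \<subset> X" using pick YZ by blast
      have "\<forall>x\<in>X. x * z \<in> X"
      proof
        fix x assume "x \<in> X"
        then have "x \<in> Y" using YXe by simp
        then have "x * z \<in> smul Y Z" using z(1) unfolding smul_def by blast
        then show "x * z \<in> X" by (simp only: YZ(5))
      qed
      then show False using closed_contra_r X R z ZX by blast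
    qed
  next
    assume ZXe: "Z = X"
    show ?thesis
    proof (rule ccontr)
      assume "smul X X \<noteq> X"
      have "Y \<noteq> X"
      proof
        assume h: "Y = X"
        have "smul Y Z = smul X X" by (simp only: h ZXe)
        then show False using YZ(5) \<open>smul X X \<noteq> X\<close> by simp
      qed
      then have "Y \<subset> X" using YX by blast
      then obtain z where z: "z \<in> Y" "z \<noteq> 1" "{1, z} \<subset> X" using pick YZ by blast
      have "\<forall>x\<in>X. z * x \<in> X"
      proof
        fix x assume "x \<in> X"
        then have "x \<in> Z" using ZXe by simp
        then have "z * x \<in> smul Y Z" using z(1) unfolding smul_def by blast
        then show "z * x \<in> X" by (simp only: YZ(5))
      qed
      then show False using closed_contra_l X R z YX by blast
    qed
  qed
qed

lemma uu_lem: "\<And>A B. A \<in> Pf1 \<Longrightarrow> B \<in> Pf1 \<Longrightarrow> smul A B = {1::'a::monoid_mult} \<Longrightarrow> A = {1} \<and> B = {1}"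
proof -
  fix A B :: "'a set" assume A: "A \<in> Pf1" and B: "B \<in> Pf1" and e: "smul A B = {1}"
  have "A \<subseteq> {1}" using smul_sup1[OF Pf1_one[OF B], of A] e by simp
  moreover have "B \<subseteq> {1}" using smul_sup2[OF Pf1_one[OF A], of B] e by simp
  ultimately show "A = {1} \<and> B = {1}" using Pf1_one[OF A] Pf1_one[OF B] by blast
qed

lemma red_lem: "mreduced Pf1 smul {1::'a::monoid_mult}" unfolding mreduced_def
proof (intro allI impI)
  fix u :: "'a set" assume "munit Pf1 smul {1} u"
  then obtain v where "u \<in> Pf1" "v \<in> Pf1" "smul u v = {1}" unfolding munit_def by blast
  then show "u = {1}" using uu_lem by blast
qed

lemma ded_lem: "mdedekind_finite Pf1 smul {1::'a::monoid_mult}" unfolding mdedekind_finite_def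
proof (intro ballI impI)
  fix u v :: "'a set" assume "u \<in> Pf1" "v \<in> Pf1" "smul u v = {1}"
  then have "u = {1}" "v = {1}" using uu_lem by blast+
  then show "smul v u = {1}" using smul_1r by simp
qed

theorem lemma2p2:
  fixes X Y :: "'a::monoid_mult set"
  assumes "X \<in> Pf1" and "Y \<in> Pf1"
  shows "(mdvd Pf1 smul X Y \<longrightarrow> X \<subseteq> Y)
    \<and> (mreduced Pf1 smul {1} \<and> mdedekind_finite Pf1 smul {1})
    \<and> (massoc Pf1 smul X Y \<longleftrightarrow> X = Y)
    \<and> (mirreducible Pf1 smul {1} X \<longleftrightarrow>
         X \<noteq> {1} \<and> (\<forall>Y'\<in>Pf1. \<forall>Z\<in>Pf1. Y' \<subset> X \<and> Z \<subset> X \<longrightarrow> X \<noteq> smul Y' Z))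
    \<and> (mirreducible Pf1 smul {1} X \<longleftrightarrow> mquark Pf1 smul {1} X)
    \<and> (mirreducible Pf1 smul {1} X \<and> \<not> matom Pf1 smul {1} X \<longrightarrow> smul X X = X)"
proof -
  have h1: "mdvd Pf1 smul X Y \<longrightarrow> X \<subseteq> Y" using mdvd_sub by blast
  have h4: "massoc Pf1 smul X Y \<longleftrightarrow> X = Y" 
  proof
    assume "massoc Pf1 smul X Y"
    then show "X = Y" unfolding massoc_def using mdvd_sub by blast
  next
    assume "X = Y"
    moreover have "mdvd Pf1 smul X X" using mdvd_left[OF assms(1) one_Pf1] smul_1r by metis
    ultimately show "massoc Pf1 smul X Y" unfolding massoc_def by simp
  qed
  have h5: "mirreducible Pf1 smul {1} X \<longleftrightarrow>
         X \<noteq> {1} \<and> (\<forall>Y'\<in>Pf1. \<forall>Z\<in>Pf1. Y' \<subset> X \<and> Z \<subset> X \<longrightarrow> X \<noteq> smul Y' Z)"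
    using irr_iff[OF assms(1)] unfolding RHS_def .
  have h6: "mirreducible Pf1 smul {1} X \<longleftrightarrow> mquark Pf1 smul {1} X"
  proof
    assume "mirreducible Pf1 smul {1} X"
    then have "RHS X" using irr_iff[OF assms(1)] by simp
    then show "mquark Pf1 smul {1} X" using irr_quark[OF assms(1)] by simp
  next
    assume "mquark Pf1 smul {1} X"
    then show "mirreducible Pf1 smul {1} X" using quark_irr[OF assms(1)] by simp
  qed
  have h7: "mirreducible Pf1 smul {1} X \<and> \<not> matom Pf1 smul {1} X \<longrightarrow> smul X X = X"
  proof
    assume a: "mirreducible Pf1 smul {1} X \<and> \<not> matom Pf1 smul {1} X"
    then have "RHS X" using irr_iff[OF assms(1)] by simp
    then show "smul X X = X" using not_atom_idem[OF assms(1)] a by simp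
  qed
  show ?thesis by (intro conjI h1 red_lem ded_lem h4 h5 h6 h7)
qed

end
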